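(* Let $G$ be a group with finite generating set $A$, and let $\varphi:L_\Sigma\to G$ be a bijection from a regular language $L_\Sigma\subseteq\Sigma^*$ over some finite alphabet $\Sigma$ such that for each $a\in A$ the relation $\{(\varphi^{-1}(g),\varphi^{-1}(ga)) : g\in G\}$ is FA-recognizable. Let $h_\varphi(n)=\max\{d_A(\varphi(w)) : w\in L_\Sigma, |w|\le n\}$. If $h_\varphi\preceq f$ for some $f\in\mathfrak{F}$, then $G\in\mathcal{B}_{\tilde f}$, where $\tilde f=f+\mathfrak{i}$.
   Context: $\mathfrak{i}(n)=n$; $d_A$ is the word metric on $G$ and $d_A(g)=d_A(e,g)$. A relation $R\subseteq(\Sigma^* )^2$ is FA-recognizable if the language of convolutions $u\otimes v$ (parallel readings of $u,v$ with the shorter padded by a new symbol $\diamond$) is regular. $\mathfrak{F}$ is the set of nondecreasing functions from some interval $[Q,\infty)\cap\mathbb{N}$ to the nonnegative reals; $g\preceq f$ means there exist $N\ge0$ and positive integers $K,M$ with $g(n)\le Kf(Mn)$ for all $n\ge N$. With $S=A\cup A^{-1}$ and $\pi:S^*\to G$ the evaluation map, a Cayley automatic representation is such a bijection $\psi:L\to G$ with $L\subseteq S^*$ (i.e., over the alphabet $S$); its function is $h(n)=\max\{d_A(\pi(w),\psi(w)): w\in L,|w|\le n\}$, and $G\in\mathcal{B}_f$ means some Cayley automatic representation over $S$ (for some finite generating set; this is independent of the choice) has $h\preceq f$. *)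

theory Defs
  imports Complex_Main "HOL-Algebra.Generated_Groups"
begin

text \<open>A language L over a finite alphabet Sig is regular if it is accepted by a
deterministic finite automaton with input alphabet Sig.  States are taken from nat
(any finite state set can be renumbered).\<close>

definition regular_lang :: "'a set \<Rightarrow> 'a list set \<Rightarrow> bool" where
  "regular_lang Sig L \<longleftrightarrow>
     L \<subseteq> lists Sig \<and>
     (\<exists>(Q::nat set) q0 (delta :: nat \<Rightarrow> 'a \<Rightarrow> nat) F.
        finite Q \<and> q0 \<in> Q \<and> (\<forall>q\<in>Q. \<forall>x\<in>Sig. delta q x \<in> Q) \<and> F \<subseteq> Q \<and>
        L = {w \<in> lists Sig. foldl delta q0 w \<in> F})"

text \<open>Convolution u \<otimes> v: parallel reading, the shorter word padded with the
new symbol diamond, which is represented by None.\<close>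

definition conv :: "'a list \<Rightarrow> 'b list \<Rightarrow> ('a option \<times> 'b option) list" where
  "conv u v = map (\<lambda>i. (if i < length u then Some (u ! i) else None,
                       if i < length v then Some (v ! i) else None))
                 [0..<max (length u) (length v)]"

definition conv_alph :: "'a set \<Rightarrow> 'b set \<Rightarrow> ('a option \<times> 'b option) set" where
  "conv_alph S T = ((insert None (Some ` S)) \<times> (insert None (Some ` T))) - {(None, None)}"

definition FA_recognizable :: "'a set \<Rightarrow> ('a list \<times> 'a list) set \<Rightarrow> bool" where
  "FA_recognizable Sig R \<longleftrightarrow>
     R \<subseteq> lists Sig \<times> lists Sig \<and>
     regular_lang (conv_alph Sig Sig) ((\<lambda>(u, v). conv u v) ` R)"

definition gen_alph :: "('g, 'b) monoid_scheme \<Rightarrow> 'g set \<Rightarrow> 'g set" where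
  "gen_alph G A = A \<union> m_inv G ` A"

definition word_eval :: "('g, 'b) monoid_scheme \<Rightarrow> 'g list \<Rightarrow> 'g" where
  "word_eval G w = foldr (\<lambda>x y. x \<otimes>\<^bsub>G\<^esub> y) w \<one>\<^bsub>G\<^esub>"

definition word_length :: "('g, 'b) monoid_scheme \<Rightarrow> 'g set \<Rightarrow> 'g \<Rightarrow> nat" where
  "word_length G A g = (LEAST n. \<exists>w \<in> lists (gen_alph G A). length w = n \<and> word_eval G w = g)"

definition word_dist :: "('g, 'b) monoid_scheme \<Rightarrow> 'g set \<Rightarrow> 'g \<Rightarrow> 'g \<Rightarrow> nat" where
  "word_dist G A g h = word_length G A (inv\<^bsub>G\<^esub> g \<otimes>\<^bsub>G\<^esub> h)"

definition fin_gen_set :: "('g, 'b) monoid_scheme \<Rightarrow> 'g set \<Rightarrow> bool" where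
  "fin_gen_set G A \<longleftrightarrow> finite A \<and> A \<subseteq> carrier G \<and> generate G A = carrier G"

definition automatic_rep ::
  "('g, 'b) monoid_scheme \<Rightarrow> 'g set \<Rightarrow> 'a set \<Rightarrow> 'a list set \<Rightarrow> ('a list \<Rightarrow> 'g) \<Rightarrow> bool" where
  "automatic_rep G A Sig L psi \<longleftrightarrow>
     finite Sig \<and> regular_lang Sig L \<and> bij_betw psi L (carrier G) \<and>
     (\<forall>a\<in>A. FA_recognizable Sig
        {(the_inv_into L psi g, the_inv_into L psi (g \<otimes>\<^bsub>G\<^esub> a)) | g. g \<in> carrier G})"

text \<open>max over a finite set of naturals, as a real; the value 0 is inserted so that the
maximum of the (possibly empty, for small n) set is well defined; since distances are
nonnegative this changes nothing whenever the set is nonempty.\<close>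

definition h_phi :: "('g, 'b) monoid_scheme \<Rightarrow> 'g set \<Rightarrow> 'a list set \<Rightarrow> ('a list \<Rightarrow> 'g) \<Rightarrow> nat \<Rightarrow> real" where
  "h_phi G A L phi n = real (Max (insert 0 {word_length G A (phi w) | w. w \<in> L \<and> length w \<le> n}))"

definition h_cayley :: "('g, 'b) monoid_scheme \<Rightarrow> 'g set \<Rightarrow> 'g list set \<Rightarrow> ('g list \<Rightarrow> 'g) \<Rightarrow> nat \<Rightarrow> real" where
  "h_cayley G A L psi n =
     real (Max (insert 0 {word_dist G A (word_eval G w) (psi w) | w. w \<in> L \<and> length w \<le> n}))"

text \<open>f is in F with domain [Q, \<infinity>): nondecreasing and nonnegative there
(values below Q are irrelevant).\<close>
definition in_frakF :: "(nat \<Rightarrow> real) \<Rightarrow> nat \<Rightarrow> bool" where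
  "in_frakF f Q \<longleftrightarrow> (\<forall>n\<ge>Q. 0 \<le> f n) \<and> (\<forall>m n. Q \<le> m \<longrightarrow> m \<le> n \<longrightarrow> f m \<le> f n)"

definition preceq :: "(nat \<Rightarrow> real) \<Rightarrow> (nat \<Rightarrow> real) \<Rightarrow> bool" (infix "\<preceq>\<^sub>F" 50) where
  "g \<preceq>\<^sub>F f \<longleftrightarrow> (\<exists>N::nat. \<exists>K M :: nat. K > 0 \<and> M > 0 \<and>
                    (\<forall>n\<ge>N. g n \<le> real K * f (M * n)))"

definition in_B :: "('g, 'b) monoid_scheme \<Rightarrow> (nat \<Rightarrow> real) \<Rightarrow> bool" where
  "in_B G f \<longleftrightarrow> (\<exists>A L psi. fin_gen_set G A \<and> L \<subseteq> lists (gen_alph G A) \<and>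
                     automatic_rep G A (gen_alph G A) L psi \<and> h_cayley G A L psi \<preceq>\<^sub>F f)"

end

theory Submission
  imports Defs
begin


lemma regular_langI:
  fixes Q :: "'q set" and delta :: "'q \<Rightarrow> 'a \<Rightarrow> 'q"
  assumes "finite Q" "qi \<in> Q" "\<forall>q\<in>Q. \<forall>x\<in>Sig. delta q x \<in> Q" "F \<subseteq> Q"
    and "L = {w \<in> lists Sig. foldl delta qi w \<in> F}"
  shows "regular_lang Sig L"
proof -
  obtain f and n :: nat where fQ: "f ` Q = {i. i < n}" and inj: "inj_on f Q"
    using finite_imp_inj_to_nat_seg[OF assms(1)] by blast
  define d' where "d' = (\<lambda>m x. f (delta (inv_into Q f m) x))"
  have fold: "foldl d' (f q) w = f (foldl delta q w) \<and> foldl delta q w \<in> Q"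
    if "q \<in> Q" "w \<in> lists Sig" for q w
    using that
  proof (induction w arbitrary: q)
    case Nil then show ?case by simp
  next
    case (Cons x w)
    have "d' (f q) x = f (delta q x)" using Cons.prems inj by (simp add: d'_def)
    moreover have "delta q x \<in> Q" using Cons.prems assms(3) by auto
    ultimately show ?case using Cons by simp
  qed
  have "L = {w \<in> lists Sig. foldl d' (f qi) w \<in> f ` F}"
  proof -
    have "foldl d' (f qi) w \<in> f ` F \<longleftrightarrow> foldl delta qi w \<in> F" if "w \<in> lists Sig" for w
      using fold[OF assms(2) that] inj assms(4) by (metis inj_on_image_mem_iff)
    then show ?thesis using assms(5) by auto
  qed
  moreover have "\<forall>q\<in>f ` Q. \<forall>x\<in>Sig. d' q x \<in> f ` Q"
    using assms(3) inj by (auto simp: d'_def)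
  moreover have "finite (f ` Q)" "f qi \<in> f ` Q" "f ` F \<subseteq> f ` Q" "L \<subseteq> lists Sig"
    using assms by auto
  ultimately show ?thesis unfolding regular_lang_def by blast
qed

lemma regular_Nil: "regular_lang X {[]}"
proof (rule regular_langI[where Q="{0::nat,1}" and qi=0 and delta="\<lambda>_ _. Suc 0" and F="{0}"])
  have h: "foldl (\<lambda>_ _. Suc 0::nat) q w = (if w = [] then q else Suc 0)" for q and w :: "'a list"
    by (induction w arbitrary: q) auto
  then show "{[]} = {w \<in> lists X. foldl (\<lambda>_ _. Suc 0::nat) 0 w \<in> {0}}" using h by auto
qed auto

lemma block_regular:
  fixes e :: "'a \<Rightarrow> 'b list"
  assumes reg: "regular_lang Sig L" and fT: "finite T" and k: "k > 0"
    and inj: "inj_on e Sig" and eT: "\<forall>x\<in>Sig. e x \<in> lists T \<and> length (e x) = k"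
  shows "regular_lang T ((\<lambda>u. concat (map e u)) ` L)"
proof -
  obtain Q :: "nat set" and qi delta F where Q: "finite Q" "qi \<in> Q" "\<forall>q\<in>Q. \<forall>x\<in>Sig. delta q x \<in> Q"
    "F \<subseteq> Q" and L: "L = {w \<in> lists Sig. foldl delta qi w \<in> F}"
    using reg unfolding regular_lang_def by blast
  define d' where "d' = (\<lambda>st s. case st of None \<Rightarrow> None | Some (q, r) \<Rightarrow>
     (if length (r @ [s]) < k then Some (q, r @ [s])
      else if r @ [s] \<in> e ` Sig then Some (delta q (inv_into Sig e (r @ [s])), []) else None))"
  define Q' where "Q' = insert None (Some ` (Q \<times> {r. set r \<subseteq> T \<and> length r \<le> k}))"
  have d'None: "foldl d' None w = None" for w by (induction w) (auto simp: d'_def)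
  have pre: "foldl d' (Some (q, r)) p = Some (q, r @ p)" if "length (r @ p) < k" for q r p
    using that by (induction p arbitrary: r) (auto simp: d'_def)
  have blk: "foldl d' (Some (q, [])) (e x) = Some (delta q x, [])" if "x \<in> Sig" for q x
  proof -
    have ne: "e x \<noteq> []" using eT that k by auto
    then have ex: "e x = butlast (e x) @ [last (e x)]" by simp
    have "foldl d' (Some (q, [])) (e x) = d' (Some (q, butlast (e x))) (last (e x))"
      using pre[of "[]" "butlast (e x)" q] eT that k by (subst ex) simp
    also have "\<dots> = Some (delta q x, [])"
      using eT that inj ex[symmetric] k by (simp add: d'_def)
    finally show ?thesis .
  qed
  have fwd: "foldl d' (Some (q, [])) (concat (map e u)) = Some (foldl delta q u, [])"
    if "u \<in> lists Sig" for q u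
    using that by (induction u arbitrary: q) (auto simp: blk)
  have inv: "foldl d' (Some (qi, [])) w = None \<or> (\<exists>u r. u \<in> lists Sig \<and> w = concat (map e u) @ r
      \<and> length r < k \<and> foldl d' (Some (qi, [])) w = Some (foldl delta qi u, r))" for w
  proof (induction w rule: rev_induct)
    case Nil then show ?case using k by (auto intro!: exI[of _ "[]"])
  next
    case (snoc s w)
    show ?case
    proof (cases "foldl d' (Some (qi, [])) w = None")
      case True then show ?thesis by (simp add: d'_def)
    next
      case False
      then obtain u r where u: "u \<in> lists Sig" "w = concat (map e u) @ r" "length r < k"
        "foldl d' (Some (qi, [])) w = Some (foldl delta qi u, r)" using snoc.IH False by metis
      show ?thesis
      proof (cases "length (r @ [s]) < k")
        case True
        then show ?thesis using u by (intro disjI2 exI[of _ u] exI[of _ "r @ [s]"]) (simp add: d'_def)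
      next
        case F: False
        show ?thesis
        proof (cases "r @ [s] \<in> e ` Sig")
          case True
          define x where "x = inv_into Sig e (r @ [s])"
          have x: "x \<in> Sig" "e x = r @ [s]" using True by (auto simp: x_def inv_into_into f_inv_into_f)
          show ?thesis using u F x k True
            by (intro disjI2 exI[of _ "u @ [x]"] exI[of _ "[]"]) (simp add: d'_def x_def[symmetric])
        next
          case False
          then show ?thesis using u F by (simp add: d'_def)
        qed
      qed
    qed
  qed
  have lang: "(\<lambda>u. concat (map e u)) ` L = {w \<in> lists T. foldl d' (Some (qi, [])) w \<in> Some ` (F \<times> {[]})}"
  proof (intro equalityI subsetI)
    fix w assume "w \<in> (\<lambda>u. concat (map e u)) ` L"
    then obtain u where u: "u \<in> L" "w = concat (map e u)" by blast
    have "u \<in> lists Sig" using u L by auto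
    then have "w \<in> lists T" using u eT by fastforce
    then show "w \<in> {w \<in> lists T. foldl d' (Some (qi, [])) w \<in> Some ` (F \<times> {[]})}"
      using fwd[OF \<open>u \<in> lists Sig\<close>] u L by auto
  next
    fix w assume w: "w \<in> {w \<in> lists T. foldl d' (Some (qi, [])) w \<in> Some ` (F \<times> {[]})}"
    have nn: "foldl d' (Some (qi, [])) w \<noteq> None" using w by auto
    obtain u r where u: "u \<in> lists Sig" "w = concat (map e u) @ r"
        "foldl d' (Some (qi, [])) w = Some (foldl delta qi u, r)" using inv[of w] nn by metis
    then have "r = []" "foldl delta qi u \<in> F" using w by auto
    then show "w \<in> (\<lambda>u. concat (map e u)) ` L" using u L by auto
  qed
  have fQ': "finite Q'" unfolding Q'_def using Q(1) finite_lists_length_le[OF fT] by auto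
  have cl: "\<forall>q\<in>Q'. \<forall>x\<in>T. d' q x \<in> Q'"
  proof (intro ballI)
    fix st x assume st: "st \<in> Q'" and x: "x \<in> T"
    show "d' st x \<in> Q'"
    proof (cases st)
      case None then show ?thesis by (simp add: Q'_def d'_def)
    next
      case (Some p)
      obtain q r where p: "p = (q, r)" by force
      have qr: "q \<in> Q" "set r \<subseteq> T" using st Some p by (auto simp: Q'_def)
      have "inv_into Sig e (r @ [x]) \<in> Sig" if "r @ [x] \<in> e ` Sig" using that by (simp add: inv_into_into)
      then show ?thesis using Some p qr x Q(3) k by (auto simp: Q'_def d'_def)
    qed
  qed
  show ?thesis
    by (rule regular_langI[where Q=Q' and qi="Some (qi, [])" and delta=d' and F="Some ` (F \<times> {[]})"])
       (use fQ' cl lang Q k in \<open>auto simp: Q'_def\<close>)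
qed




lemma conv_Nil_left: "conv [] v = map (\<lambda>y. (None, Some y)) v"
  unfolding conv_def by (rule nth_equalityI) auto

lemma conv_Nil_right: "conv u [] = map (\<lambda>x. (Some x, None)) u"
  unfolding conv_def by (rule nth_equalityI) auto

lemma conv_Cons: "conv (a # u) (b # v) = (Some a, Some b) # conv u v"
  unfolding conv_def by (simp add: map_upt_Suc del: upt_Suc)

lemma conv_append: "length p = length q \<Longrightarrow> conv (p @ u) (q @ v) = conv p q @ conv u v"
proof (induction p arbitrary: q)
  case Nil then show ?case by (simp add: conv_Nil_left)
next
  case (Cons a p)
  then obtain b q' where "q = b # q'" by (cases q) auto
  then show ?case using Cons by (simp add: conv_Cons)
qed

lemma conv_same_len: "length p = length q \<Longrightarrow> conv p q = zip (map Some p) (map Some q)"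
proof (induction p arbitrary: q)
  case Nil then show ?case by (simp add: conv_Nil_left)
next
  case (Cons a p)
  then obtain b q' where "q = b # q'" by (cases q) auto
  then show ?case using Cons by (simp add: conv_Cons)
qed

lemma conv_diag: "conv w w = map (\<lambda>x. (Some x, Some x)) w"
  by (simp add: conv_same_len zip_map_map zip_same_conv_map)

definition blk :: "('a \<Rightarrow> 'b list) \<Rightarrow> nat \<Rightarrow> 'a option \<Rightarrow> 'b option list" where
  "blk e k x = (case x of Some a \<Rightarrow> map Some (e a) | None \<Rightarrow> replicate k None)"

definition cE :: "('a \<Rightarrow> 'b list) \<Rightarrow> nat \<Rightarrow> 'a option \<times> 'a option \<Rightarrow> ('b option \<times> 'b option) list" where
  "cE e k xy = zip (blk e k (fst xy)) (blk e k (snd xy))"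

lemma cE_Some: "cE e k (Some a, Some b) = zip (map Some (e a)) (map Some (e b))"
  by (simp add: cE_def blk_def)

lemma zip_rep_left: "length xs = k \<Longrightarrow> zip (replicate k None) (map Some xs) = map (\<lambda>y. (None, Some y)) xs"
  by (induction xs arbitrary: k) auto

lemma zip_rep_right: "length xs = k \<Longrightarrow> zip (map Some xs) (replicate k None) = map (\<lambda>y. (Some y, None)) xs"
  by (induction xs arbitrary: k) auto

lemma conv_blocks:
  assumes "\<forall>x\<in>set u \<union> set v. length (e x) = k"
  shows "conv (concat (map e u)) (concat (map e v)) = concat (map (cE e k) (conv u v))"
  using assms
proof (induction u arbitrary: v)
  case Nil
  have "conv [] (concat (map e v)) = concat (map (\<lambda>a. map (\<lambda>y. (None, Some y)) (e a)) v)"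
    by (simp add: conv_Nil_left map_concat comp_def)
  also have "\<dots> = concat (map (cE e k) (conv [] v))"
    using Nil by (auto simp: conv_Nil_left cE_def blk_def zip_rep_left intro!: arg_cong[where f=concat])
  finally show ?case by simp
next
  case (Cons a u)
  show ?case
  proof (cases v)
    case Nil
    have "conv (concat (map e (a # u))) [] = concat (map (\<lambda>a. map (\<lambda>y. (Some y, None)) (e a)) (a # u))"
      by (simp add: conv_Nil_right map_concat comp_def)
    also have "\<dots> = concat (map (cE e k) (conv (a # u) []))"
      using Cons.prems Nil by (auto simp: conv_Nil_right cE_def blk_def zip_rep_right intro!: arg_cong[where f=concat])
    finally show ?thesis using Nil by simp
  next
    case (Cons b v')
    have "conv (concat (map e (a # u))) (concat (map e v)) = conv (e a) (e b) @ conv (concat (map e u)) (concat (map e v'))"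
      using Cons Cons.prems by (simp add: conv_append)
    also have "\<dots> = concat (map (cE e k) (conv (a # u) v))"
      using Cons Cons.prems Cons.IH[of v'] by (simp add: conv_Cons cE_Some conv_same_len)
    finally show ?thesis .
  qed
qed




lemma blk_inj:
  assumes inj: "inj_on e Sig" and len: "\<forall>x\<in>Sig. length (e x) = k" and k: "k > 0"
    and x: "x \<in> insert None (Some ` Sig)" and y: "y \<in> insert None (Some ` Sig)"
    and eq: "blk e k x = blk e k y"
  shows "x = y"
proof -
  have ne: "blk e k (Some a) \<noteq> blk e k None" if "a \<in> Sig" for a
  proof
    assume h: "blk e k (Some a) = blk e k None"
    have "e a \<noteq> []" using len that k by auto
    then obtain c cs where "e a = c # cs" by (cases "e a") auto
    then show False using h k by (cases k) (auto simp: blk_def)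
  qed
  show ?thesis
  proof (cases x)
    case None then show ?thesis using y eq ne by (cases y) (auto simp: blk_def)
  next
    case (Some a)
    then show ?thesis using x y eq ne inj
      by (cases y) (auto simp: blk_def inj_on_def dest: sym)
  qed
qed

lemma blk_len: "\<forall>x\<in>Sig. length (e x) = k \<Longrightarrow> x \<in> insert None (Some ` Sig) \<Longrightarrow> length (blk e k x) = k"
  by (auto simp: blk_def)

lemma cE_inj:
  assumes inj: "inj_on e Sig" and len: "\<forall>x\<in>Sig. length (e x) = k" and k: "k > 0"
  shows "inj_on (cE e k) (conv_alph Sig Sig)"
proof (rule inj_onI)
  fix xy zw assume a: "xy \<in> conv_alph Sig Sig" "zw \<in> conv_alph Sig Sig" "cE e k xy = cE e k zw"
  obtain x y z w where p: "xy = (x, y)" "zw = (z, w)" by force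
  have m: "x \<in> insert None (Some ` Sig)" "y \<in> insert None (Some ` Sig)"
     "z \<in> insert None (Some ` Sig)" "w \<in> insert None (Some ` Sig)"
    using a p by (auto simp: conv_alph_def)
  have z: "zip (blk e k x) (blk e k y) = zip (blk e k z) (blk e k w)"
    using a p by (simp add: cE_def)
  have l: "length (blk e k x) = k" "length (blk e k y) = k" "length (blk e k z) = k" "length (blk e k w) = k"
    using m len by (auto intro: blk_len)
  have "map fst (zip (blk e k x) (blk e k y)) = map fst (zip (blk e k z) (blk e k w))"
    "map snd (zip (blk e k x) (blk e k y)) = map snd (zip (blk e k z) (blk e k w))" using z by auto
  then have "blk e k x = blk e k z" "blk e k y = blk e k w" using l by auto
  then show "xy = zw" using blk_inj[OF inj len k] m p by metis
qed

lemma cE_lists: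
  assumes eT: "\<forall>x\<in>Sig. e x \<in> lists T \<and> length (e x) = k" and k: "k > 0"
    and xy: "xy \<in> conv_alph Sig Sig"
  shows "cE e k xy \<in> lists (conv_alph T T) \<and> length (cE e k xy) = k"
proof -
  obtain x y where p: "xy = (x, y)" by force
  have m: "x \<in> insert None (Some ` Sig)" "y \<in> insert None (Some ` Sig)" "(x, y) \<noteq> (None, None)"
    using xy p by (auto simp: conv_alph_def)
  have len: "\<forall>x\<in>Sig. length (e x) = k" using eT by auto
  have l: "length (blk e k x) = k" "length (blk e k y) = k" using m len by (auto intro: blk_len)
  have sx: "set (blk e k x) \<subseteq> insert None (Some ` T)" "set (blk e k y) \<subseteq> insert None (Some ` T)"
    using m eT by (force simp: blk_def in_lists_conv_set)+
  have "(blk e k x ! i, blk e k y ! i) \<noteq> (None, None)" if "i < k" for i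
  proof (cases x)
    case None
    then obtain b where "y = Some b" "b \<in> Sig" using m by auto
    then show ?thesis using that eT by (auto simp: blk_def)
  next
    case (Some a)
    then have "a \<in> Sig" using m by auto
    then show ?thesis using that eT Some by (auto simp: blk_def)
  qed
  moreover have "(blk e k x ! i, blk e k y ! i) \<in> insert None (Some ` T) \<times> insert None (Some ` T)" if "i < k" for i
  proof -
    have "blk e k x ! i \<in> set (blk e k x)" "blk e k y ! i \<in> set (blk e k y)" using l that by auto
    then show ?thesis using sx by blast
  qed
  ultimately have "\<forall>i<k. (blk e k x ! i, blk e k y ! i) \<in> conv_alph T T"
    unfolding conv_alph_def by blast
  then have "set (cE e k xy) \<subseteq> conv_alph T T" using l p
    by (auto simp: cE_def set_zip)
  then show ?thesis using l p by (auto simp: cE_def in_lists_conv_set)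
qed

context group begin

lemma word_eval_carrier: "set w \<subseteq> carrier G \<Longrightarrow> word_eval G w \<in> carrier G"
  by (induction w) (auto simp: word_eval_def)

lemma word_eval_append: "set x \<subseteq> carrier G \<Longrightarrow> set y \<subseteq> carrier G \<Longrightarrow>
   word_eval G (x @ y) = word_eval G x \<otimes> word_eval G y"
proof (induction x)
  case Nil then show ?case using word_eval_carrier by (simp add: word_eval_def)
next
  case (Cons a x)
  then show ?case using word_eval_carrier[of x] word_eval_carrier[of y]
    by (simp add: word_eval_def m_assoc)
qed

lemma word_eval_rev_inv: "set w \<subseteq> carrier G \<Longrightarrow> word_eval G (rev (map (m_inv G) w)) = inv (word_eval G w)"
proof (induction w)
  case Nil then show ?case by (simp add: word_eval_def)
next
  case (Cons a w)
  have s1: "set (rev (map (m_inv G) w)) \<subseteq> carrier G" "set [inv a] \<subseteq> carrier G" using Cons.prems by auto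
  have "word_eval G (rev (map (m_inv G) (a # w))) = word_eval G (rev (map (m_inv G) w)) \<otimes> word_eval G [inv a]"
    using word_eval_append[OF s1] by simp
  also have "\<dots> = inv (word_eval G w) \<otimes> inv a" using Cons by (simp add: word_eval_def)
  also have "\<dots> = inv (a \<otimes> word_eval G w)" using Cons word_eval_carrier[of w] by (simp add: inv_mult_group)
  finally show ?case by (simp add: word_eval_def)
qed

lemma word_exists:
  assumes "A \<subseteq> carrier G" "g \<in> generate G A"
  shows "\<exists>v \<in> lists (gen_alph G A). word_eval G v = g"
  using assms(2)
proof (induction rule: generate.induct)
  case one then show ?case by (auto simp: word_eval_def intro!: bexI[of _ "[]"])
next
  case (incl h) then show ?case
    using assms(1) by (auto simp: word_eval_def gen_alph_def intro!: bexI[of _ "[h]"])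
next
  case (inv h) then show ?case
    using assms(1) by (auto simp: word_eval_def gen_alph_def intro!: bexI[of _ "[inv h]"])
next
  case (eng h1 h2)
  then obtain v1 v2 where "v1 \<in> lists (gen_alph G A)" "v2 \<in> lists (gen_alph G A)"
    "word_eval G v1 = h1" "word_eval G v2 = h2" by blast
  moreover have "gen_alph G A \<subseteq> carrier G" using assms(1) by (auto simp: gen_alph_def)
  ultimately show ?case using word_eval_append[of v1 v2] by (intro bexI[of _ "v1 @ v2"]) auto
qed

lemma word_length_le: "v \<in> lists (gen_alph G A) \<Longrightarrow> word_eval G v = g \<Longrightarrow> word_length G A g \<le> length v"
  unfolding word_length_def by (rule Least_le) blast

lemma word_length_wit:
  assumes "A \<subseteq> carrier G" "g \<in> generate G A"
  shows "\<exists>v \<in> lists (gen_alph G A). length v = word_length G A g \<and> word_eval G v = g"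
proof -
  obtain v where "v \<in> lists (gen_alph G A)" "word_eval G v = g" using word_exists[OF assms] by blast
  then have "\<exists>n. \<exists>w \<in> lists (gen_alph G A). length w = n \<and> word_eval G w = g" by blast
  then show ?thesis unfolding word_length_def by (rule LeastI_ex)
qed

end




lemma ce_len: "\<forall>x\<in>set u. length (e x) = k \<Longrightarrow> length (concat (map e u)) = k * length u"
  by (induction u) auto

lemma ce_inj:
  assumes inj: "inj_on e Sig" and len: "\<forall>x\<in>Sig. length (e x) = k" and k: "k > 0"
  shows "inj_on (\<lambda>u. concat (map e u)) (lists Sig)"
proof (rule inj_onI)
  fix u v assume u: "u \<in> lists Sig" and v: "v \<in> lists Sig" and eq: "concat (map e u) = concat (map e v)"
  have "length u = length v" using ce_len[of u e k] ce_len[of v e k] u v len eq k by auto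
  then show "u = v" using u v eq
  proof (induction u v rule: list_induct2)
    case Nil then show ?case by simp
  next
    case (Cons a u b v)
    have "e a @ concat (map e u) = e b @ concat (map e v)" using Cons.prems by simp
    moreover have "length (e a) = length (e b)" using Cons.prems len by auto
    ultimately have "e a = e b" "concat (map e u) = concat (map e v)" by auto
    then show ?case using Cons inj by (auto simp: inj_on_def)
  qed
qed

lemma finite_conv_alph: "finite S \<Longrightarrow> finite (conv_alph S S)"
  by (simp add: conv_alph_def)

lemma finite_Max_set:
  assumes "finite S" "L \<subseteq> lists S"
  shows "finite {g w | w. w \<in> L \<and> length w \<le> n}"
proof -
  have "{g w | w. w \<in> L \<and> length w \<le> n} \<subseteq> g ` {xs. set xs \<subseteq> S \<and> length xs \<le> n}"
    using assms(2) by auto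
  then show ?thesis using finite_lists_length_le[OF assms(1)] finite_subset by blast
qed

lemma preceqI:
  assumes "\<And>n. n \<ge> N \<Longrightarrow> g n \<le> real K * f (M * n)" "K > 0" "M > 0"
  shows "g \<preceq>\<^sub>F f"
  unfolding preceq_def using assms by blast

theorem mainTheorem9:
  fixes G :: "('g, 'b) monoid_scheme" and A :: "'g set"
    and Sig :: "'s set" and L :: "'s list set" and phi :: "'s list \<Rightarrow> 'g"
    and f :: "nat \<Rightarrow> real" and Q :: nat
  assumes "group G"
    and "fin_gen_set G A"
    and "automatic_rep G A Sig L phi"
    and "in_frakF f Q"
    and "h_phi G A L phi \<preceq>\<^sub>F f"
  shows "in_B G (\<lambda>n. f n + real n)"
proof -
  interpret group G by fact
  have fA: "finite A" "A \<subseteq> carrier G" "generate G A = carrier G" using assms(2) by (auto simp: fin_gen_set_def)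
  have ar: "finite Sig" "regular_lang Sig L" "bij_betw phi L (carrier G)"
    "\<forall>a\<in>A. FA_recognizable Sig {(the_inv_into L phi g, the_inv_into L phi (g \<otimes>\<^bsub>G\<^esub> a)) | g. g \<in> carrier G}"
    using assms(3) by (auto simp: automatic_rep_def)
  have LS: "L \<subseteq> lists Sig" using ar(2) by (simp add: regular_lang_def)
  show ?thesis
  proof (cases "carrier G = {\<one>\<^bsub>G\<^esub>}")
    case True
    define psi :: "'g list \<Rightarrow> 'g" where "psi = (\<lambda>_. \<one>\<^bsub>G\<^esub>)"
    have ga: "gen_alph G {\<one>\<^bsub>G\<^esub>} = {\<one>\<^bsub>G\<^esub>}" by (simp add: gen_alph_def)
    have fg: "fin_gen_set G {\<one>\<^bsub>G\<^esub>}"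
      using True generate_incl[of "{\<one>\<^bsub>G\<^esub>}"] generate.one[of G "{\<one>\<^bsub>G\<^esub>}"] by (auto simp: fin_gen_set_def)
    have ti: "the_inv_into {[]} psi \<one>\<^bsub>G\<^esub> = []"
      by (rule the_inv_into_f_eq) (auto simp: psi_def)
    have rel: "{(the_inv_into {[]} psi g, the_inv_into {[]} psi (g \<otimes>\<^bsub>G\<^esub> a)) | g. g \<in> carrier G} = {([], [])}"
      if "a \<in> {\<one>\<^bsub>G\<^esub>}" for a
      using that True ti by auto
    have "(\<lambda>(u, v). conv u v) ` {([], [])} = {[]}" by (simp add: conv_Nil_left)
    then have "FA_recognizable {\<one>\<^bsub>G\<^esub>} {([], [])}"
      unfolding FA_recognizable_def using regular_Nil by (simp add: conv_Nil_left)
    moreover have "bij_betw psi {[]} (carrier G)" using True by (simp add: bij_betw_def psi_def)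
    ultimately have ar1: "automatic_rep G {\<one>\<^bsub>G\<^esub>} (gen_alph G {\<one>\<^bsub>G\<^esub>}) {[]} psi"
      unfolding automatic_rep_def ga using rel by (simp add: regular_Nil)
    have "word_length G {\<one>\<^bsub>G\<^esub>} \<one>\<^bsub>G\<^esub> = 0"
      using word_length_le[of "[]" "{\<one>\<^bsub>G\<^esub>}" "\<one>\<^bsub>G\<^esub>"] by (simp add: word_eval_def)
    then have h0: "h_cayley G {\<one>\<^bsub>G\<^esub>} {[]} psi n = 0" for n
      by (simp add: h_cayley_def word_dist_def word_eval_def psi_def)
    have pr1: "h_cayley G {\<one>\<^bsub>G\<^esub>} {[]} psi \<preceq>\<^sub>F (\<lambda>n. f n + real n)"
    proof (rule preceqI[of Q _ 1 _ 1])
      fix n :: nat assume "Q \<le> n"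
      then have "0 \<le> f n" using assms(4) unfolding in_frakF_def by blast
      then show "h_cayley G {\<one>\<^bsub>G\<^esub>} {[]} psi n \<le> real 1 * (\<lambda>n. f n + real n) (1 * n)"
        using h0 by simp
    qed simp_all
    have "{[]} \<subseteq> lists (gen_alph G {\<one>\<^bsub>G\<^esub>})" by simp
    then show ?thesis unfolding in_B_def using fg ar1 pr1 by blast
  next
    case False
    define A' where "A' = insert \<one>\<^bsub>G\<^esub> A"
    define S where "S = gen_alph G A'"
    have A'c: "A' \<subseteq> carrier G" using fA by (auto simp: A'_def)
    have genA': "generate G A' = carrier G"
      using mono_generate[of A A'] generate_incl[OF A'c] fA by (auto simp: A'_def)
    have fg: "fin_gen_set G A'" using fA A'c genA' by (auto simp: fin_gen_set_def A'_def)
    have fS: "finite S" using fA by (simp add: S_def gen_alph_def A'_def)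
    have Sc: "S \<subseteq> carrier G" using A'c by (auto simp: S_def gen_alph_def)
    have Sinv: "m_inv G x \<in> S" if "x \<in> S" for x
      using that A'c by (auto simp: S_def gen_alph_def)
    have gAA': "gen_alph G A \<subseteq> S" by (auto simp: S_def gen_alph_def A'_def)
    obtain a0 where a0: "a0 \<in> A" "a0 \<noteq> \<one>\<^bsub>G\<^esub>"
    proof -
      have "A \<subseteq> {\<one>\<^bsub>G\<^esub>} \<Longrightarrow> generate G A \<subseteq> {\<one>\<^bsub>G\<^esub>}"
      proof
        fix h assume A1: "A \<subseteq> {\<one>\<^bsub>G\<^esub>}" and hg: "h \<in> generate G A"
        from hg show "h \<in> {\<one>\<^bsub>G\<^esub>}" by (induction h rule: generate.induct) (use A1 in auto)
      qed
      then show ?thesis using that False fA by blast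
    qed
    have cS: "2 \<le> card S"
    proof -
      have "{\<one>\<^bsub>G\<^esub>, a0} \<subseteq> S" using a0 by (auto simp: S_def gen_alph_def A'_def)
      then have "card {\<one>\<^bsub>G\<^esub>, a0} \<le> card S" using fS by (rule card_mono[rotated])
      then show ?thesis using a0 by simp
    qed
    define k where "k = card Sig + 1"
    have k0: "k > 0" by (simp add: k_def)
    have "card Sig \<le> card {xs. set xs \<subseteq> S \<and> length xs = k}"
    proof -
      have "card Sig < 2 ^ k" unfolding k_def using less_exp[of "card Sig + 1"] by simp
      also have "\<dots> \<le> card S ^ k" using cS by (simp add: power_mono)
      finally show ?thesis using card_lists_length_eq[OF fS, of k] by simp
    qed
    then obtain e where e1: "e ` Sig \<subseteq> {xs. set xs \<subseteq> S \<and> length xs = k}" and einj: "inj_on e Sig"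
      using card_le_inj[OF ar(1) finite_lists_length_eq[OF fS]] by blast
    have eT: "\<forall>x\<in>Sig. e x \<in> lists S \<and> length (e x) = k" using e1 by auto
    have elen: "\<forall>x\<in>Sig. length (e x) = k" using eT by auto
    define ce where "ce = (\<lambda>u. concat (map e u))"
    define L' where "L' = ce ` L"
    define psi where "psi = phi \<circ> the_inv_into L ce"
    have ceinj: "inj_on ce L" using ce_inj[OF einj elen k0] LS by (auto simp: ce_def intro: inj_on_subset)
    have bce: "bij_betw ce L L'" using ceinj by (simp add: L'_def bij_betw_def)
    have bpsi: "bij_betw psi L' (carrier G)"
      unfolding psi_def using bij_betw_trans[OF bij_betw_the_inv_into[OF bce] ar(3)] .
    have ceS: "ce u \<in> lists S" if "u \<in> lists Sig" for u
      using that eT by (induction u) (auto simp: ce_def)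
    have L'S: "L' \<subseteq> lists S" using LS ceS unfolding L'_def by blast
    have key: "the_inv_into L' psi g = ce (the_inv_into L phi g)" if "g \<in> carrier G" for g
    proof -
      define u where "u = the_inv_into L phi g"
      have u: "u \<in> L" "phi u = g" using that ar(3) unfolding u_def
        by (auto simp: bij_betw_def the_inv_into_into f_the_inv_into_f)
      have "psi (ce u) = g" using u ceinj by (simp add: psi_def the_inv_into_f_f)
      then show ?thesis using bpsi u unfolding u_def[symmetric]
        by (intro the_inv_into_f_eq) (auto simp: bij_betw_def L'_def)
    qed
    have tiL': "the_inv_into L' psi g \<in> L'" if "g \<in> carrier G" for g
      using bpsi that by (auto simp: bij_betw_def the_inv_into_into)
    have tiL: "the_inv_into L phi g \<in> L" if "g \<in> carrier G" for g
      using ar(3) that by (auto simp: bij_betw_def the_inv_into_into)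
    have regL': "regular_lang S L'"
      unfolding L'_def ce_def by (rule block_regular[OF ar(2) fS k0 einj eT])
    have rec: "FA_recognizable S {(the_inv_into L' psi g, the_inv_into L' psi (g \<otimes>\<^bsub>G\<^esub> a)) | g. g \<in> carrier G}"
      if a: "a \<in> A'" for a
    proof (cases "a = \<one>\<^bsub>G\<^esub>")
      case True
      have eqR: "{(the_inv_into L' psi g, the_inv_into L' psi (g \<otimes>\<^bsub>G\<^esub> a)) | g. g \<in> carrier G}
          = (\<lambda>w. (w, w)) ` L'"
      proof -
        have "the_inv_into L' psi ` carrier G = L'"
          using bij_betw_the_inv_into[OF bpsi] by (simp add: bij_betw_def)
        have "{(the_inv_into L' psi g, the_inv_into L' psi (g \<otimes>\<^bsub>G\<^esub> a)) | g. g \<in> carrier G}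
            = (\<lambda>g. (the_inv_into L' psi g, the_inv_into L' psi g)) ` carrier G"
          unfolding Setcompr_eq_image True by (rule image_cong) simp_all
        also have "\<dots> = (\<lambda>w. (w, w)) ` (the_inv_into L' psi ` carrier G)" by (simp add: image_image)
        finally show ?thesis using \<open>the_inv_into L' psi ` carrier G = L'\<close> by simp
      qed
      have im: "(\<lambda>(u, v). conv u v) ` ((\<lambda>w. (w, w)) ` L') = (\<lambda>w. concat (map (\<lambda>x. [(Some x, Some x)]) w)) ` L'"
        by (auto simp: conv_diag image_image map_concat)
      have "regular_lang (conv_alph S S) ((\<lambda>w. concat (map (\<lambda>x. [(Some x, Some x)]) w)) ` L')"
        by (rule block_regular[OF regL' finite_conv_alph[OF fS], of 1]) (auto simp: inj_on_def conv_alph_def)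
      then show ?thesis unfolding FA_recognizable_def eqR im using L'S by auto
    next
      case False
      then have aA: "a \<in> A" using a by (simp add: A'_def)
      define R where "R = {(the_inv_into L phi g, the_inv_into L phi (g \<otimes>\<^bsub>G\<^esub> a)) | g. g \<in> carrier G}"
      have recR: "FA_recognizable Sig R" using ar(4) aA by (simp add: R_def)
      have Rim: "R = (\<lambda>g. (the_inv_into L phi g, the_inv_into L phi (g \<otimes>\<^bsub>G\<^esub> a))) ` carrier G"
        unfolding R_def Setcompr_eq_image ..
      have eqR: "{(the_inv_into L' psi g, the_inv_into L' psi (g \<otimes>\<^bsub>G\<^esub> a)) | g. g \<in> carrier G}
          = (\<lambda>(u, v). (ce u, ce v)) ` R"
        unfolding Rim Setcompr_eq_image image_image
        by (rule image_cong) (use key aA fA(2) in auto)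
      have RS: "R \<subseteq> lists Sig \<times> lists Sig" using recR by (simp add: FA_recognizable_def)
      have im: "(\<lambda>(u, v). conv u v) ` ((\<lambda>(u, v). (ce u, ce v)) ` R)
          = (\<lambda>w. concat (map (cE e k) w)) ` ((\<lambda>(u, v). conv u v) ` R)"
      proof -
        have "conv (ce u) (ce v) = concat (map (cE e k) (conv u v))" if "(u, v) \<in> R" for u v
          unfolding ce_def using that RS elen by (intro conv_blocks) auto
        then show ?thesis unfolding image_image by (intro image_cong) auto
      qed
      have "regular_lang (conv_alph S S) ((\<lambda>w. concat (map (cE e k) w)) ` ((\<lambda>(u, v). conv u v) ` R))"
        using recR unfolding FA_recognizable_def
        by (intro block_regular[OF _ finite_conv_alph[OF fS] k0 cE_inj[OF einj elen k0]])
           (use cE_lists[OF eT k0] in blast)+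
      moreover have "(\<lambda>(u, v). (ce u, ce v)) ` R \<subseteq> lists S \<times> lists S"
      proof
        fix p assume "p \<in> (\<lambda>(u, v). (ce u, ce v)) ` R"
        then obtain u v where uv: "(u, v) \<in> R" "p = (ce u, ce v)" by auto
        then have "u \<in> lists Sig" "v \<in> lists Sig" using RS by auto
        then show "p \<in> lists S \<times> lists S" using uv ceS by blast
      qed
      ultimately show ?thesis unfolding FA_recognizable_def eqR im by simp
    qed
    have arep: "automatic_rep G A' S L' psi"
      unfolding automatic_rep_def using fS regL' bpsi rec by blast
    have hb: "h_cayley G A' L' psi n \<le> real n + h_phi G A L phi n" for n
    proof -
      define P where "P = {word_length G A (phi w) | w. w \<in> L \<and> length w \<le> n}"
      define D where "D = {word_dist G A' (word_eval G w) (psi w) | w. w \<in> L' \<and> length w \<le> n}"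
      have fP: "finite P" unfolding P_def using finite_Max_set[OF ar(1) LS] .
      have fD: "finite D" unfolding D_def using finite_Max_set[OF fS L'S] .
      have "d \<le> n + Max (insert 0 P)" if dD: "d \<in> D" for d
      proof -
        obtain w where w: "w \<in> L'" "length w \<le> n" "d = word_dist G A' (word_eval G w) (psi w)"
          using dD by (auto simp: D_def)
        obtain u where u: "u \<in> L" "w = ce u" using w by (auto simp: L'_def)
        have uS: "u \<in> lists Sig" using u LS by auto
        have lu: "length u \<le> length w" using ce_len[of u e k] uS elen k0 u by (auto simp: ce_def)
        have pw: "psi w = phi u" using u ceinj by (simp add: psi_def the_inv_into_f_f)
        have pc: "phi u \<in> carrier G" using u ar(3) by (auto simp: bij_betw_def)
        obtain v where v: "v \<in> lists (gen_alph G A)" "length v = word_length G A (phi u)" "word_eval G v = phi u"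
          using word_length_wit[OF fA(2)] pc fA(3) by blast
        have wS: "w \<in> lists S" using w L'S by auto
        have x1: "rev (map (m_inv G) w) @ v \<in> lists S" using wS v gAA' Sinv by auto
        have "word_eval G (rev (map (m_inv G) w) @ v) = m_inv G (word_eval G w) \<otimes>\<^bsub>G\<^esub> phi u"
        proof -
          have s1: "set (rev (map (m_inv G) w)) \<subseteq> carrier G" "set v \<subseteq> carrier G" "set w \<subseteq> carrier G"
            using wS v Sc gAA' by auto
          show ?thesis using word_eval_append[OF s1(1,2)] word_eval_rev_inv[OF s1(3)] v by simp
        qed
        then have "d \<le> length (rev (map (m_inv G) w) @ v)"
          using word_length_le[OF x1[unfolded S_def]] w pw by (simp add: word_dist_def)
        also have "\<dots> = length w + word_length G A (phi u)" using v by simp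
        also have "word_length G A (phi u) \<le> Max (insert 0 P)"
          using u lu w fP by (intro Max_ge) (auto simp: P_def)
        finally show ?thesis using w by linarith
      qed
      then have "Max (insert 0 D) \<le> n + Max (insert 0 P)" using fD by (intro Max.boundedI) auto
      then show ?thesis unfolding h_cayley_def h_phi_def D_def[symmetric] P_def[symmetric] by simp
    qed
    obtain N K M where KM: "K > (0::nat)" "M > (0::nat)" "\<forall>n\<ge>N. h_phi G A L phi n \<le> real K * f (M * n)"
      using assms(5) unfolding preceq_def by blast
    have pr: "h_cayley G A' L' psi \<preceq>\<^sub>F (\<lambda>n. f n + real n)"
    proof (rule preceqI[of N _ K _ M])
      fix n :: nat assume n: "N \<le> n"
      have "real n \<le> real K * real M * real n"
      proof -
        have "1 \<le> K * M" using KM by simp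
        then have "n \<le> K * M * n" by simp
        then show ?thesis by (metis of_nat_le_iff of_nat_mult)
      qed
      show "h_cayley G A' L' psi n \<le> real K * (\<lambda>n. f n + real n) (M * n)"
      proof -
        have "h_phi G A L phi n \<le> real K * f (M * n)" using KM(3) n by blast
        then show ?thesis using hb[of n] \<open>real n \<le> real K * real M * real n\<close>
          by (simp add: algebra_simps)
      qed
    qed (use KM in auto)
    show ?thesis unfolding in_B_def using fg L'S arep pr unfolding S_def by blast
  qed
qed


end
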